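(* Let $\mathcal{M}(Y,r)$ be a matroid of rank $k$ on ground set $Y=\{y_1,\dots,y_m\}$, and let $\mathcal{I}_{\mathcal{M}}(Z,\mathcal{R})$ be the corresponding generalized index coding problem (defined in the context). Then $\mathcal{M}$ has a linear representation over $\mathbb{F}_2$ if and only if there exists a perfect scalar linear index code for $\mathcal{I}_{\mathcal{M}}(Z,\mathcal{R})$ over $\mathbb{F}_2$.
   Context: For a matroid $\mathcal{M}$, $\mathcal{B}(\mathcal{M})$ denotes its set of bases and $\mathfrak{C}(\mathcal{M})$ its set of circuits. $\mathcal{M}$ has a linear representation over $\mathbb{F}_2$ if there is a matrix over $\mathbb{F}_2$ with columns indexed by $Y$ such that for every $S\subseteq Y$ the rank of the submatrix of columns indexed by $S$ equals $r(S)$. The problem $\mathcal{I}_{\mathcal{M}}(Z,\mathcal{R})$: messages $Z=Y\cup X$ with $X=\{x_1,\dots,x_k\}$, each message in $\mathbb{F}_2$. Receivers are pairs (demanded message, Has-set); $\mathcal{R}=R_1\cup R_2\cup R_3$ with $R_1=\{(x_i,B): B\in\mathcal{B}(\mathcal{M}), i=1,\dots,k\}$ (the receiver knows the messages in $B$); $R_2=\{(y,\sum_{y_j\in C\setminus\{y\}}y_j): C\in\mathfrak{C}(\mathcal{M}), y\in C\}$ (the receiver knows only the single sum $\sum_{y_j\in C\setminus\{y\}}y_j\in\mathbb{F}_2$); $R_3=\{(y_i,X): i=1,\dots,m\}$ (the receiver knows all of $x_1,\dots,x_k$). A scalar linear index code of length $l$ over $\mathbb{F}_2$ is a linear map $f:\mathbb{F}_2^{m+k}\to\mathbb{F}_2^l$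 applied to the vector of all messages such that each receiver can compute its demanded message from its Has-set and $f$ of the messages. With $\mu$ the maximum number of receivers having the same Has-set, the code is perfect if $l=\mu$. *)

theory Defs
  imports Complex_Main "HOL-Library.Z2" "HOL-Library.Function_Algebras"
begin

text \<open>The field F_2 is the type bit of HOL-Library.Z2.
  Ground set Y = {y_1,...,y_m} is encoded as the index set {0..<m} (y_{i+1} ~ index i).\<close>

definition ground :: "nat \<Rightarrow> nat set" where
  "ground m = {0..<m}"

definition matroid_rank :: "nat \<Rightarrow> (nat set \<Rightarrow> nat) \<Rightarrow> bool" where
  "matroid_rank m r \<longleftrightarrow>
     (\<forall>S. S \<subseteq> ground m \<longrightarrow> r S \<le> card S) \<and>
     (\<forall>S T. S \<subseteq> T \<and> T \<subseteq> ground m \<longrightarrow> r S \<le> r T) \<and>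
     (\<forall>S T. S \<subseteq> ground m \<and> T \<subseteq> ground m \<longrightarrow> r (S \<union> T) + r (S \<inter> T) \<le> r S + r T)"

definition indep :: "(nat set \<Rightarrow> nat) \<Rightarrow> nat set \<Rightarrow> bool" where
  "indep r S \<longleftrightarrow> r S = card S"

definition bases :: "nat \<Rightarrow> (nat set \<Rightarrow> nat) \<Rightarrow> nat set set" where
  "bases m r = {B. B \<subseteq> ground m \<and> indep r B \<and> r B = r (ground m)}"

definition circuits :: "nat \<Rightarrow> (nat set \<Rightarrow> nat) \<Rightarrow> nat set set" where
  "circuits m r = {C. C \<subseteq> ground m \<and> \<not> indep r C \<and> (\<forall>D. D \<subset> C \<longrightarrow> indep r D)}"

definition scale2 :: "bit \<Rightarrow> (nat \<Rightarrow> bit) \<Rightarrow> (nat \<Rightarrow> bit)" where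
  "scale2 c v = (\<lambda>j. c * v j)"

text \<open>Rank of a set of column vectors in F_2^n (vectors as nat => bit with zero entries
  beyond row n): the dimension of their span.\<close>
definition rank2 :: "(nat \<Rightarrow> bit) set \<Rightarrow> nat" where
  "rank2 V = vector_space.dim scale2 V"

text \<open>A matrix over F_2 with n rows whose columns are indexed by Y: column i is col i.\<close>
definition F2_representable :: "nat \<Rightarrow> (nat set \<Rightarrow> nat) \<Rightarrow> bool" where
  "F2_representable m r \<longleftrightarrow>
     (\<exists>(n::nat) (col :: nat \<Rightarrow> nat \<Rightarrow> bit).
        (\<forall>i j. n \<le> j \<longrightarrow> col i j = 0) \<and>
        (\<forall>S. S \<subseteq> ground m \<longrightarrow> rank2 (col ` S) = r S))"

text \<open>Messages Z = Y \<union> X are indexed by {0..<m+k}: y_{i+1} ~ index i (i < m),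
  x_{j+1} ~ index m+j (j < k). A message vector is w :: nat => bit (entries beyond m+k
  are irrelevant). A Has-set is represented as the set of linear functionals (coefficient
  vectors over the message indices) whose values the receiver knows. A receiver is a
  pair (index of demanded message, Has-set).\<close>

definition unit_vec :: "nat \<Rightarrow> nat \<Rightarrow> bit" where
  "unit_vec a = (\<lambda>s. if s = a then 1 else 0)"

definition indic :: "nat set \<Rightarrow> nat \<Rightarrow> bit" where
  "indic A = (\<lambda>s. if s \<in> A then 1 else 0)"

definition R1 :: "nat \<Rightarrow> (nat set \<Rightarrow> nat) \<Rightarrow> nat \<Rightarrow> (nat \<times> (nat \<Rightarrow> bit) set) set" where
  "R1 m r k = {(m + i, unit_vec ` B) | i B. i < k \<and> B \<in> bases m r}"

definition R2 :: "nat \<Rightarrow> (nat set \<Rightarrow> nat) \<Rightarrow> (nat \<times> (nat \<Rightarrow> bit) set) set" where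
  "R2 m r = {(y, {indic (C - {y})}) | y C. C \<in> circuits m r \<and> y \<in> C}"

definition R3 :: "nat \<Rightarrow> nat \<Rightarrow> (nat \<times> (nat \<Rightarrow> bit) set) set" where
  "R3 m k = {(i, unit_vec ` {m..<m+k}) | i. i < m}"

definition receivers :: "nat \<Rightarrow> (nat set \<Rightarrow> nat) \<Rightarrow> nat \<Rightarrow> (nat \<times> (nat \<Rightarrow> bit) set) set" where
  "receivers m r k = R1 m r k \<union> R2 m r \<union> R3 m k"

definition mu :: "(nat \<times> (nat \<Rightarrow> bit) set) set \<Rightarrow> nat" where
  "mu R = Max {card {d. (d, H) \<in> R} | H. \<exists>d. (d, H) \<in> R}"

definition lin_eval :: "nat \<Rightarrow> (nat \<Rightarrow> bit) \<Rightarrow> (nat \<Rightarrow> bit) \<Rightarrow> bit" where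
  "lin_eval N h w = (\<Sum>s<N. h s * w s)"

definition encode :: "nat \<Rightarrow> nat \<Rightarrow> (nat \<Rightarrow> nat \<Rightarrow> bit) \<Rightarrow> (nat \<Rightarrow> bit) \<Rightarrow> (nat \<Rightarrow> bit)" where
  "encode N l L w = (\<lambda>t. if t < l then (\<Sum>s<N. L t s * w s) else 0)"

definition known :: "nat \<Rightarrow> (nat \<Rightarrow> bit) set \<Rightarrow> (nat \<Rightarrow> bit) \<Rightarrow> ((nat \<Rightarrow> bit) \<Rightarrow> bit)" where
  "known N H w = (\<lambda>h. if h \<in> H then lin_eval N h w else 0)"

definition is_index_code :: "nat \<Rightarrow> (nat \<times> (nat \<Rightarrow> bit) set) set \<Rightarrow> nat \<Rightarrow> (nat \<Rightarrow> nat \<Rightarrow> bit) \<Rightarrow> bool" where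
  "is_index_code N R l L \<longleftrightarrow>
     (\<forall>(d, H) \<in> R. \<exists>g. \<forall>w :: nat \<Rightarrow> bit. g (known N H w) (encode N l L w) = w d)"

definition perfect_scalar_linear_code_exists :: "nat \<Rightarrow> (nat \<times> (nat \<Rightarrow> bit) set) set \<Rightarrow> bool" where
  "perfect_scalar_linear_code_exists N R \<longleftrightarrow> (\<exists>L. is_index_code N R (mu R) L)"

end

theory Submission
  imports Defs
begin


declare add_bit_eq_xor[simp del] mult_bit_eq_and[simp del]

interpretation V2: vector_space scale2
  by unfold_locales (auto simp: scale2_def fun_eq_iff algebra_simps)

lemma bit_add_self[simp]: "(a::bit) + a = 0"
  by (cases a) auto

lemma bit_eq_add: "((a::bit) + b = 0) = (a = b)"
  by (cases a; cases b) auto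

definition findep :: "(nat \<Rightarrow> nat \<Rightarrow> bit) \<Rightarrow> nat set \<Rightarrow> bool" where
  "findep col S \<longleftrightarrow> (\<forall>c. (\<Sum>j\<in>S. scale2 (c j) (col j)) = 0 \<longrightarrow> (\<forall>j\<in>S. c j = 0))"

lemma findep_imp:
  assumes "finite S" "findep col S"
  shows "inj_on col S" "V2.independent (col ` S)"
proof -
  show inj: "inj_on col S"
  proof (rule inj_onI, rule ccontr)
    fix a b assume ab: "a \<in> S" "b \<in> S" "col a = col b" "a \<noteq> b"
    let ?c = "\<lambda>j. if j = a \<or> j = b then (1::bit) else 0"
    have "(\<Sum>j\<in>S. scale2 (?c j) (col j)) = (\<Sum>j\<in>{a,b}. scale2 (?c j) (col j))"
      by (rule sum.mono_neutral_right) (use assms ab in \<open>auto simp: scale2_def fun_eq_iff\<close>)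
    also have "\<dots> = 0" using ab by (auto simp: scale2_def fun_eq_iff)
    finally show False using assms(2) ab unfolding findep_def by force
  qed
  show "V2.independent (col ` S)"
  proof (rule V2.independent_if_scalars_zero)
    show "finite (col ` S)" using assms by simp
    fix c v assume h: "(\<Sum>v\<in>col ` S. scale2 (c v) v) = 0" "v \<in> col ` S"
    have "(\<Sum>j\<in>S. scale2 (c (col j)) (col j)) = 0"
      using h(1) by (simp add: sum.reindex[OF inj])
    then show "c v = 0" using assms(2) h(2) unfolding findep_def by auto
  qed
qed

lemma imp_findep:
  assumes "inj_on col S" "V2.independent (col ` S)" "finite S"
  shows "findep col S"
  unfolding findep_def
proof (intro allI impI ballI)
  fix c j assume h: "(\<Sum>j\<in>S. scale2 (c j) (col j)) = 0" "j \<in> S"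
  let ?d = "\<lambda>v. c (the_inv_into S col v)"
  have "(\<Sum>v\<in>col ` S. scale2 (?d v) v) = (\<Sum>j\<in>S. scale2 (c j) (col j))"
    by (simp add: sum.reindex[OF assms(1)] the_inv_into_f_f[OF assms(1)])
  then have "?d (col j) = 0" using h
    by (intro V2.independentD[OF assms(2), of "col ` S" ?d]) (auto simp: assms(3))
  then show "c j = 0" by (simp add: the_inv_into_f_f[OF assms(1) h(2)])
qed

lemma findep_iff_dim:
  assumes "finite S"
  shows "findep col S \<longleftrightarrow> V2.dim (col ` S) = card S"
proof
  assume "findep col S"
  with findep_imp[OF assms] show "V2.dim (col ` S) = card S"
    by (simp add: V2.dim_eq_card_independent card_image)
next
  assume d: "V2.dim (col ` S) = card S"
  obtain B where B: "B \<subseteq> col ` S" "V2.independent B" "col ` S \<subseteq> V2.span B" "card B = V2.dim (col ` S)"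
    using V2.basis_exists by blast
  have fin: "finite (col ` S)" using assms by simp
  have "card (col ` S) \<le> card S" by (rule card_image_le[OF assms])
  moreover have "card B \<le> card (col ` S)" using B(1) fin by (rule card_mono[rotated])
  ultimately have cS: "card (col ` S) = card S" and "card B = card (col ` S)" using B(4) d by auto
  then have "B = col ` S" using B(1) fin by (metis card_subset_eq)
  moreover have "inj_on col S" using cS assms by (simp add: eq_card_imp_inj_on)
  ultimately show "findep col S" using B(2) imp_findep assms by auto
qed



lemma lin_eval_add: "lin_eval N h (w + w') = lin_eval N h w + lin_eval N h w'"
  by (simp add: lin_eval_def distrib_left sum.distrib)

lemma encode_add: "encode N l L (w + w') = encode N l L w + encode N l L w'"
  by (simp add: encode_def fun_eq_iff distrib_left sum.distrib)

lemma lin_eval_zero[simp]: "lin_eval N h 0 = 0"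
  by (simp add: lin_eval_def)

lemma encode_zero[simp]: "encode N l L 0 = 0"
  by (simp add: encode_def fun_eq_iff)

lemma lin_eval_unit: "a < N \<Longrightarrow> lin_eval N (unit_vec a) w = w a"
proof -
  assume a: "a < N"
  have "lin_eval N (unit_vec a) w = (\<Sum>s\<in>{..<N}. if s = a then w a else 0)"
    unfolding lin_eval_def unit_vec_def by (rule sum.cong) auto
  also have "\<dots> = w a" using a by simp
  finally show ?thesis .
qed

lemma lin_eval_indic: "D \<subseteq> {..<N} \<Longrightarrow> lin_eval N (indic D) w = (\<Sum>j\<in>D. w j)"
proof -
  assume D: "D \<subseteq> {..<N}"
  have "lin_eval N (indic D) w = (\<Sum>s\<in>{..<N}. if s \<in> D then w s else 0)"
    unfolding lin_eval_def indic_def by (rule sum.cong) auto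
  also have "\<dots> = (\<Sum>s\<in>{..<N} \<inter> D. w s)" by (simp add: sum.inter_restrict)
  also have "{..<N} \<inter> D = D" using D by auto
  finally show ?thesis .
qed

lemma code_imp_kernel:
  assumes "is_index_code N R l L" "(d, H) \<in> R" "\<forall>h\<in>H. lin_eval N h w = 0" "encode N l L w = 0"
  shows "w d = 0"
proof -
  have "\<exists>g. \<forall>w. g (known N H w) (encode N l L w) = w d"
    using bspec[OF assms(1)[unfolded is_index_code_def] assms(2)] by simp
  then obtain g where g: "\<And>w. g (known N H w) (encode N l L w) = w d" by blast
  have "known N H w = known N H 0" using assms(3) by (auto simp: known_def fun_eq_iff)
  then have "w d = g (known N H 0) (encode N l L 0)" using g[of w] assms(4) by simp
  also have "\<dots> = 0" using g[of 0] by simp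
  finally show ?thesis .
qed

lemma kernel_imp_code:
  assumes "\<And>d H w. (d, H) \<in> R \<Longrightarrow> \<forall>h\<in>H. lin_eval N h w = 0 \<Longrightarrow> encode N l L w = 0 \<Longrightarrow> w d = 0"
  shows "is_index_code N R l L"
  unfolding is_index_code_def
proof (clarify)
  fix d H assume dH: "(d, H) \<in> R"
  define g where "g = (\<lambda>kn c. (SOME w'. known N H w' = kn \<and> encode N l L w' = c) d)"
  have "g (known N H w) (encode N l L w) = w d" for w
  proof -
    define w' where "w' = (SOME w'. known N H w' = known N H w \<and> encode N l L w' = encode N l L w)"
    have "known N H w' = known N H w \<and> encode N l L w' = encode N l L w"
      unfolding w'_def by (rule someI[of _ w]) simp
    then have k: "known N H w' = known N H w" and e: "encode N l L w' = encode N l L w" by auto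
    have "\<forall>h\<in>H. lin_eval N h (w + w') = 0"
    proof
      fix h assume "h \<in> H"
      then have "lin_eval N h w' = lin_eval N h w" using k unfolding known_def fun_eq_iff by metis
      then show "lin_eval N h (w + w') = 0" by (simp add: lin_eval_add)
    qed
    moreover have "encode N l L (w + w') = 0" using e by (simp add: encode_add fun_eq_iff)
    ultimately have "(w + w') d = 0" by (rule assms[OF dH])
    then have "w d = w' d" by (simp add: bit_eq_add)
    then have "w' d = w d" by simp
    then show ?thesis unfolding g_def w'_def[symmetric] .
  qed
  then show "\<exists>g. \<forall>w. g (known N H w) (encode N l L w) = w d" by blast
qed



lemma ground_finite[simp]: "finite (ground m)" by (simp add: ground_def)

lemma mr_le_card: "matroid_rank m r \<Longrightarrow> S \<subseteq> ground m \<Longrightarrow> r S \<le> card S"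
  by (simp add: matroid_rank_def)
lemma mr_mono: "matroid_rank m r \<Longrightarrow> S \<subseteq> T \<Longrightarrow> T \<subseteq> ground m \<Longrightarrow> r S \<le> r T"
  by (simp add: matroid_rank_def)
lemma mr_submod: "matroid_rank m r \<Longrightarrow> S \<subseteq> ground m \<Longrightarrow> T \<subseteq> ground m \<Longrightarrow> r (S \<union> T) + r (S \<inter> T) \<le> r S + r T"
  by (simp add: matroid_rank_def)
lemma mr_empty: "matroid_rank m r \<Longrightarrow> r {} = 0"
  using mr_le_card[of m r "{}"] by simp

lemma mr_extend:
  assumes mr: "matroid_rank m r" and T: "finite T"
  shows "J \<union> T \<subseteq> ground m \<Longrightarrow> indep r J \<Longrightarrow>
         \<exists>I. J \<subseteq> I \<and> I \<subseteq> J \<union> T \<and> indep r I \<and> card I = r (J \<union> T)"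
  using T
proof (induction T rule: finite_induct)
  case empty
  then show ?case by (auto simp: indep_def)
next
  case (insert e T)
  then obtain I where I: "J \<subseteq> I" "I \<subseteq> J \<union> T" "indep r I" "card I = r (J \<union> T)" by auto
  show ?case
  proof (cases "e \<in> J \<union> T")
    case True
    then have "J \<union> insert e T = J \<union> T" by auto
    then show ?thesis using I by auto
  next
    case False
    let ?S' = "J \<union> T"
    have S: "J \<union> insert e T = insert e ?S'" by auto
    have gr: "insert e ?S' \<subseteq> ground m" using insert.prems S by auto
    have fin: "finite ?S'" using gr by (meson finite_subset ground_finite subset_insertI2 subset_refl)
    have finI: "finite I" using I(2) fin finite_subset by auto
    have "r (?S' \<union> {e}) + r (?S' \<inter> {e}) \<le> r ?S' + r {e}"
      using gr by (intro mr_submod[OF mr]) auto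
    moreover have "r {e} \<le> 1" using mr_le_card[OF mr, of "{e}"] gr by auto
    moreover have "?S' \<inter> {e} = {}" using False by auto
    ultimately have up: "r (insert e ?S') \<le> r ?S' + 1" by (simp add: mr_empty[OF mr])
    have lo: "r ?S' \<le> r (insert e ?S')" using gr by (intro mr_mono[OF mr]) auto
    show ?thesis
    proof (cases "r (insert e ?S') = r ?S'")
      case True
      then show ?thesis using I S by auto
    next
      case neq: False
      then have eq: "r (insert e ?S') = r ?S' + 1" using up lo by auto
      have eI: "e \<notin> I" using I(2) False by auto
      have "r (insert e I \<union> ?S') + r (insert e I \<inter> ?S') \<le> r (insert e I) + r ?S'"
        using gr I(2) by (intro mr_submod[OF mr]) auto
      moreover have "insert e I \<union> ?S' = insert e ?S'" using I(2) by auto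
      moreover have "insert e I \<inter> ?S' = I" using I(2) False by auto
      ultimately have "r (insert e I) \<ge> card I + 1" using eq I(3,4) unfolding indep_def by auto
      moreover have "r (insert e I) \<le> card (insert e I)"
        using gr I(2) by (intro mr_le_card[OF mr]) auto
      ultimately have "indep r (insert e I)" using eI finI unfolding indep_def by auto
      moreover have "card (insert e I) = r (J \<union> insert e T)" using eI finI I(4) eq S by simp
      ultimately show ?thesis using I(1,2) S by (intro exI[of _ "insert e I"]) auto
    qed
  qed
qed

lemma mr_indep_subset:
  assumes mr: "matroid_rank m r" and S: "S \<subseteq> ground m"
  shows "\<exists>I. I \<subseteq> S \<and> indep r I \<and> card I = r S"
proof -
  have "finite S" using S finite_subset ground_finite by blast
  moreover have "indep r {}" using mr_empty[OF mr] by (simp add: indep_def)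
  ultimately show ?thesis using mr_extend[OF mr, of S "{}"] S by auto
qed

lemma mr_basis_ext:
  assumes mr: "matroid_rank m r" and J: "J \<subseteq> ground m" "indep r J"
  shows "\<exists>B. J \<subseteq> B \<and> B \<in> bases m r"
proof -
  obtain I where "J \<subseteq> I" "I \<subseteq> J \<union> ground m" "indep r I" "card I = r (J \<union> ground m)"
    using mr_extend[OF mr ground_finite[of m], of J] J by auto
  moreover have "J \<union> ground m = ground m" using J by auto
  ultimately show ?thesis unfolding bases_def indep_def by auto
qed

lemma mr_circuit:
  assumes mr: "matroid_rank m r" and J: "J \<subseteq> ground m" "\<not> indep r J"
  shows "\<exists>C. C \<subseteq> J \<and> C \<in> circuits m r"
proof -
  let ?P = "\<lambda>n. \<exists>D. D \<subseteq> J \<and> \<not> indep r D \<and> card D = n"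
  have ex: "?P (card J)" using J by auto
  define n where "n = (LEAST n. ?P n)"
  have "?P n" unfolding n_def by (rule LeastI[of ?P, OF ex])
  then obtain C where C: "C \<subseteq> J" "\<not> indep r C" "card C = n" by auto
  have finJ: "finite J" using J finite_subset ground_finite by blast
  have "indep r D" if "D \<subset> C" for D
  proof (rule ccontr)
    assume "\<not> indep r D"
    moreover have "D \<subseteq> J" using that C(1) by auto
    ultimately have "?P (card D)" by blast
    then have "n \<le> card D" unfolding n_def by (rule Least_le)
    moreover have "card D < card C" using that C(1) finJ by (meson finite_subset psubset_card_mono)
    ultimately show False using C by auto
  qed
  then show ?thesis using C J unfolding circuits_def by auto
qed

lemma card_supp:
  assumes "finite B"
  shows "finite {z::nat \<Rightarrow> bit. \<forall>j. j \<notin> B \<longrightarrow> z j = 0} \<and>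
         card {z::nat \<Rightarrow> bit. \<forall>j. j \<notin> B \<longrightarrow> z j = 0} = 2 ^ card B"
  using assms
proof (induction B rule: finite_induct)
  case empty
  have "{z::nat \<Rightarrow> bit. \<forall>j. j \<notin> {} \<longrightarrow> z j = 0} = {0}" by (auto simp: fun_eq_iff)
  then show ?case by simp
next
  case (insert b B)
  let ?S = "{z::nat \<Rightarrow> bit. \<forall>j. j \<notin> B \<longrightarrow> z j = 0}"
  let ?T = "{z::nat \<Rightarrow> bit. \<forall>j. j \<notin> insert b B \<longrightarrow> z j = 0}"
  have eq: "?T = ?S \<union> (\<lambda>z. z(b := 1)) ` ?S"
  proof
    show "?T \<subseteq> ?S \<union> (\<lambda>z. z(b := 1)) ` ?S"
    proof
      fix z assume z: "z \<in> ?T"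
      show "z \<in> ?S \<union> (\<lambda>z. z(b := 1)) ` ?S"
      proof (cases "z b = 0")
        case True then show ?thesis using z by auto
      next
        case False
        then have "z = (z(b := 0))(b := 1)" by (auto simp: fun_eq_iff)
        moreover have "z(b := 0) \<in> ?S" using z by auto
        ultimately show ?thesis by blast
      qed
    qed
    show "?S \<union> (\<lambda>z. z(b := 1)) ` ?S \<subseteq> ?T" by auto
  qed
  have disj: "?S \<inter> (\<lambda>z. z(b := 1)) ` ?S = {}" using insert.hyps(2) by auto
  have inj: "inj_on (\<lambda>z. z(b := 1)) ?S"
  proof (rule inj_onI)
    fix x y assume "x \<in> ?S" "y \<in> ?S" "x(b := 1) = y(b := 1)"
    then show "x = y" using insert.hyps(2) by (auto simp: fun_eq_iff) (metis fun_upd_apply)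
  qed
  have "card ?T = card ?S + card ((\<lambda>z. z(b := 1)) ` ?S)"
    unfolding eq using insert.IH disj by (intro card_Un_disjoint) auto
  also have "\<dots> = 2 * 2 ^ card B" using card_image[OF inj] insert.IH by simp
  finally show ?case using insert.IH eq insert.hyps by simp
qed



lemma receivers_cases:
  assumes "(d, H) \<in> receivers m r k"
  obtains (r1) i B where "d = m + i" "H = unit_vec ` B" "i < k" "B \<in> bases m r"
    | (r2) C where "C \<in> circuits m r" "d \<in> C" "H = {indic (C - {d})}"
    | (r3) "d < m" "H = unit_vec ` {m..<m+k}"
  using assms unfolding receivers_def R1_def R2_def R3_def
  by (elim UnE CollectE exE conjE) auto

lemma unit_vec_inj: "unit_vec a = unit_vec b \<Longrightarrow> a = b"
  unfolding unit_vec_def fun_eq_iff by (metis zero_neq_one)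

lemma inj_unit_vec: "inj unit_vec" by (meson injI unit_vec_inj)

lemma indic_unit: "indic D = unit_vec a \<Longrightarrow> D = {a}"
proof -
  assume h: "indic D = unit_vec a"
  have "x \<in> D \<longleftrightarrow> x = a" for x
    using fun_cong[OF h, of x] unfolding unit_vec_def indic_def
    by (cases "x \<in> D"; cases "x = a") auto
  then show ?thesis by auto
qed

lemma circuit_sub: "C \<in> circuits m r \<Longrightarrow> C \<subseteq> ground m"
  unfolding circuits_def by blast

lemma basis_props:
  assumes "B \<in> bases m r" "r (ground m) = k"
  shows "B \<subseteq> ground m" "card B = k"
  using assms unfolding bases_def indep_def by auto

lemma k_le_m: "matroid_rank m r \<Longrightarrow> r (ground m) = k \<Longrightarrow> k \<le> m"
  using mr_le_card[of m r "ground m"] by (simp add: ground_def)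

lemma demands_H3:
  assumes mr: "matroid_rank m r" and rk: "r (ground m) = k"
  shows "{d. (d, unit_vec ` {m..<m+k}) \<in> receivers m r k} \<subseteq> {..<m}"
proof
  fix d assume "d \<in> {d. (d, unit_vec ` {m..<m+k}) \<in> receivers m r k}"
  then have "(d, unit_vec ` {m..<m+k}) \<in> receivers m r k" by simp
  then show "d \<in> {..<m}"
  proof (cases rule: receivers_cases)
    case (r1 i B)
    have "unit_vec ` B = unit_vec ` {m..<m+k}" using r1(2) by (rule sym)
    then have "B = {m..<m+k}" unfolding inj_image_eq_iff[OF inj_unit_vec] .
    moreover have "m \<in> {m..<m+k}" using r1(3) by simp
    ultimately have "m \<in> B" by (simp only:)
    moreover have "B \<subseteq> {0..<m}" using basis_props(1)[OF r1(4) rk] by (simp add: ground_def)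
    ultimately show ?thesis by auto
  next
    case (r2 C) then show ?thesis using circuit_sub[of C m r] by (auto simp: ground_def)
  qed auto
qed

lemma demands_le:
  assumes mr: "matroid_rank m r" and rk: "r (ground m) = k"
  shows "card {d. (d, H) \<in> receivers m r k} \<le> m"
proof -
  let ?R = "receivers m r k"
  let ?H3 = "unit_vec ` {m..<m+k}"
  show ?thesis
  proof (cases "H = ?H3")
    case True
    have "{d. (d, H) \<in> ?R} \<subseteq> {..<m}" using True demands_H3[OF mr rk] by simp
    then show ?thesis by (metis card_lessThan card_mono finite_lessThan)
  next
    case notH3: False
    show ?thesis
    proof (cases "\<exists>i B. i < k \<and> B \<in> bases m r \<and> H = unit_vec ` B")
      case True
      then obtain B0 where B0: "B0 \<in> bases m r" "H = unit_vec ` B0" by auto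
      have sub: "{d. (d, H) \<in> ?R} \<subseteq> {m..<m+k} \<union> (ground m - B0)"
      proof
        fix d assume "d \<in> {d. (d, H) \<in> ?R}"
        then have "(d, H) \<in> ?R" by simp
        then show "d \<in> {m..<m+k} \<union> (ground m - B0)"
        proof (cases rule: receivers_cases)
          case (r1 i B) then show ?thesis by auto
        next
          case (r2 C)
          then have "indic (C - {d}) \<in> unit_vec ` B0" using B0 by auto
          then obtain a where a: "a \<in> B0" "indic (C - {d}) = unit_vec a" by auto
          have "C - {d} = {a}" using indic_unit[OF a(2)] .
          then have "a \<noteq> d" by auto
          have "B0 = {a}"
          proof
            show "B0 \<subseteq> {a}"
            proof
              fix b assume "b \<in> B0"
              then have "unit_vec b \<in> {indic (C - {d})}" using r2 B0 by auto
              then show "b \<in> {a}" using a unit_vec_inj by auto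
            qed
          qed (use a in auto)
          moreover have "d \<in> ground m" using r2 circuit_sub[of C m r] by auto
          ultimately show ?thesis using \<open>a \<noteq> d\<close> by auto
        next
          case r3 then show ?thesis using notH3 by auto
        qed
      qed
      have "card ({m..<m+k} \<union> (ground m - B0)) \<le> card {m..<m+k} + card (ground m - B0)"
        by (rule card_Un_le)
      also have "card (ground m - B0) = m - k"
        using basis_props[OF B0(1) rk] by (simp add: card_Diff_subset finite_subset ground_def)
      finally have "card ({m..<m+k} \<union> (ground m - B0)) \<le> m" using k_le_m[OF mr rk] by simp
      then show ?thesis using sub by (meson card_mono finite_UnI finite_Diff ground_finite finite_atLeastLessThan le_trans)
    next
      case False
      have "{d. (d, H) \<in> ?R} \<subseteq> ground m"
      proof
        fix d assume "d \<in> {d. (d, H) \<in> ?R}"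
        then have "(d, H) \<in> ?R" by simp
        then show "d \<in> ground m"
        proof (cases rule: receivers_cases)
          case (r2 C) then show ?thesis using circuit_sub[of C m r] by auto
        qed (use False notH3 in auto)
      qed
      then show ?thesis by (metis card_mono ground_finite card_atLeastLessThan ground_def minus_nat.diff_0)
    qed
  qed
qed

lemma mu_eq:
  assumes mr: "matroid_rank m r" and rk: "r (ground m) = k" and m: "m > 0"
  shows "mu (receivers m r k) = m"
proof -
  let ?R = "receivers m r k"
  let ?H3 = "unit_vec ` {m..<m+k}"
  let ?Cs = "{card {d. (d, H) \<in> ?R} | H. \<exists>d. (d, H) \<in> ?R}"
  have le: "c \<le> m" if "c \<in> ?Cs" for c using that demands_le[OF mr rk] by blast
  then have fin: "finite ?Cs" unfolding finite_nat_set_iff_bounded_le by blast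
  have r3: "(d, ?H3) \<in> ?R" if "d < m" for d
    using that unfolding receivers_def R3_def by auto
  have s: "{..<m} \<subseteq> {d. (d, ?H3) \<in> ?R}" using r3 by auto
  have "{d. (d, ?H3) \<in> ?R} = {..<m}" using s demands_H3[OF mr rk] by blast
  then have ge: "m \<le> card {d. (d, ?H3) \<in> ?R}" by simp
  have mem: "card {d. (d, ?H3) \<in> ?R} \<in> ?Cs" using r3[OF m] by blast
  have "card {d. (d, ?H3) \<in> ?R} \<le> Max ?Cs" by (rule Max_ge[OF fin mem])
  moreover have "Max ?Cs \<in> ?Cs" using fin mem by (intro Max_in) auto
  then have "Max ?Cs \<le> m" by (rule le)
  ultimately show ?thesis unfolding mu_def using ge by linarith
qed

lemma receivers_empty:
  assumes mr: "matroid_rank m r" and rk: "r (ground m) = k" and m: "m = 0"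
  shows "receivers m r k = {}"
proof -
  have k: "k = 0" using k_le_m[OF mr rk] m by simp
  have "circuits m r = {}"
  proof (rule equals0I)
    fix C assume C: "C \<in> circuits m r"
    then have "C = {}" using circuit_sub[OF C] m by (simp add: ground_def)
    moreover have "\<not> indep r C" using C unfolding circuits_def by blast
    ultimately show False using mr_empty[OF mr] by (simp add: indep_def)
  qed
  then show ?thesis using k m unfolding receivers_def R1_def R2_def R3_def by auto
qed



definition fx :: "(nat \<Rightarrow> bit) set \<Rightarrow> (nat \<Rightarrow> nat \<Rightarrow> bit) \<Rightarrow> nat \<Rightarrow> (nat \<Rightarrow> bit) \<Rightarrow> (nat \<Rightarrow> bit) \<Rightarrow> bit" where
  "fx Bv e k x v = (\<Sum>i<k. V2.representation Bv v (e i) * x i)"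

lemma fx_add: "V2.independent Bv \<Longrightarrow> u \<in> V2.span Bv \<Longrightarrow> v \<in> V2.span Bv \<Longrightarrow>
   fx Bv e k x (u + v) = fx Bv e k x u + fx Bv e k x v"
  unfolding fx_def by (simp add: V2.representation_add distrib_right sum.distrib)

lemma fx_scale: "V2.independent Bv \<Longrightarrow> v \<in> V2.span Bv \<Longrightarrow>
   fx Bv e k x (scale2 c v) = c * fx Bv e k x v"
  unfolding fx_def by (simp add: V2.representation_scale sum_distrib_left mult.assoc)

lemma fx_zero: "fx Bv e k x 0 = 0"
  unfolding fx_def by (simp add: V2.representation_zero)

lemma fx_basis:
  assumes "V2.independent Bv" "bij_betw e {..<k} Bv" "i < k"
  shows "fx Bv e k x (e i) = x i"
proof -
  have ei: "e i \<in> Bv" using assms(2,3) bij_betwE by blast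
  have inj: "inj_on e {..<k}" using assms(2) bij_betw_def by blast
  have "fx Bv e k x (e i) = (\<Sum>j<k. (if e j = e i then 1 else 0) * x j)"
    unfolding fx_def V2.representation_basis[OF assms(1) ei] by simp
  also have "\<dots> = (\<Sum>j<k. if j = i then x j else 0)"
  proof (rule sum.cong)
    fix j assume "j \<in> {..<k}"
    then have "(e j = e i) = (j = i)" using inj assms(3) inj_on_eq_iff by fastforce
    then show "(if e j = e i then 1 else 0) * x j = (if j = i then x j else 0)" by simp
  qed simp
  also have "\<dots> = x i" using assms(3) by simp
  finally show ?thesis .
qed

lemma fx_sum:
  assumes "V2.independent Bv" "finite I" "\<And>j. j \<in> I \<Longrightarrow> g j \<in> V2.span Bv"
  shows "fx Bv e k x (sum g I) = (\<Sum>j\<in>I. fx Bv e k x (g j))"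
  using assms(2,3)
proof (induction I rule: finite_induct)
  case empty then show ?case by (simp only: sum.empty fx_zero)
next
  case (insert a I)
  have "fx Bv e k x (sum g (insert a I)) = fx Bv e k x (g a + sum g I)"
    by (simp only: sum.insert[OF insert.hyps])
  also have "\<dots> = fx Bv e k x (g a) + fx Bv e k x (sum g I)"
    using insert.prems by (intro fx_add[OF assms(1)] V2.span_sum) auto
  also have "\<dots> = fx Bv e k x (g a) + (\<Sum>j\<in>I. fx Bv e k x (g j))"
  proof -
    have "fx Bv e k x (sum g I) = (\<Sum>j\<in>I. fx Bv e k x (g j))"
      using insert.IH insert.prems by blast
    then show ?thesis by (rule arg_cong)
  qed
  finally show ?case by (simp only: sum.insert[OF insert.hyps])
qed

lemma fx_vanish:
  assumes ind: "V2.independent Bv" and S: "S \<subseteq> V2.span Bv" and z: "\<forall>v\<in>S. fx Bv e k x v = 0"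
    and v: "v \<in> V2.span S"
  shows "fx Bv e k x v = 0"
proof -
  let ?P = "\<lambda>v. v \<in> V2.span Bv \<and> fx Bv e k x v = 0"
  have "?P v"
  proof (rule V2.span_induct[OF v])
    show "V2.subspace (Collect ?P)"
    proof (rule V2.subspaceI)
      show "0 \<in> Collect ?P" by (simp add: V2.span_zero fx_zero)
      show "x + y \<in> Collect ?P" if "x \<in> Collect ?P" "y \<in> Collect ?P" for x y
        using that by (simp add: V2.span_add fx_add[OF ind])
      show "scale2 c x \<in> Collect ?P" if "x \<in> Collect ?P" for c x
        using that by (simp add: V2.span_scale fx_scale[OF ind])
    qed
    show "?P x" if "x \<in> S" for x using that S z by auto
  qed
  then show ?thesis by simp
qed



lemma sum_split_add: "(\<Sum>s<m+k. g s) = (\<Sum>s<m. g s) + (\<Sum>i<k. g (m+i))"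
  for g :: "nat \<Rightarrow> 'a::comm_monoid_add"
  by (induction k) (simp_all add: add.assoc)

lemma scale2_zero[simp]: "scale2 0 v = 0" by (simp add: scale2_def fun_eq_iff)
lemma scale2_one[simp]: "scale2 1 v = v" by (simp add: scale2_def fun_eq_iff)

lemma V2_dim_mono_fin:
  assumes T: "finite T" and ST: "S \<subseteq> T"
  shows "V2.dim S \<le> V2.dim T"
proof -
  obtain BS where BS: "BS \<subseteq> S" "V2.independent BS" "S \<subseteq> V2.span BS" "card BS = V2.dim S"
    using V2.basis_exists by blast
  obtain B where B: "BS \<subseteq> B" "B \<subseteq> T" "V2.independent B" "T \<subseteq> V2.span B"
    using V2.maximal_independent_subset_extend[of BS T] BS ST by blast
  have "V2.span B = V2.span T"
  proof
    show "V2.span B \<subseteq> V2.span T" using B(2) by (rule V2.span_mono)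
    show "V2.span T \<subseteq> V2.span B" using V2.span_mono[OF B(4)] by (simp add: V2.span_span)
  qed
  then have "V2.dim T = card B" using V2.dim_eq_card[of B T] B(3) by simp
  moreover have "finite B" using B(2) T finite_subset by blast
  ultimately show ?thesis using BS(4) card_mono[OF _ B(1)] by simp
qed

lemma V2_dim_insert:
  assumes x: "x \<notin> V2.span S" and fS: "finite S"
  shows "V2.dim (insert x S) = V2.dim S + 1"
proof -
  obtain B where B: "B \<subseteq> S" "V2.independent B" "S \<subseteq> V2.span B" "card B = V2.dim S"
    using V2.basis_exists by blast
  have spB: "V2.span B = V2.span S"
  proof
    show "V2.span B \<subseteq> V2.span S" using B(1) by (rule V2.span_mono)
    show "V2.span S \<subseteq> V2.span B" using V2.span_mono[OF B(3)] by (simp add: V2.span_span)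
  qed
  have xB: "x \<notin> V2.span B" using x spB by simp
  have ind: "V2.independent (insert x B)" by (rule V2.independent_insertI[OF xB B(2)])
  have sp: "V2.span (insert x B) = V2.span (insert x S)"
  proof
    show "V2.span (insert x B) \<subseteq> V2.span (insert x S)" using B(1) by (intro V2.span_mono) auto
    have "insert x S \<subseteq> V2.span (insert x B)"
      using B(3) V2.span_mono[of B "insert x B"] V2.span_base[of x "insert x B"] by auto
    then show "V2.span (insert x S) \<subseteq> V2.span (insert x B)"
      using V2.span_mono by (metis V2.span_span)
  qed
  have "V2.dim (insert x S) = card (insert x B)" using V2.dim_eq_card[OF sp ind] .
  moreover have "finite B" using B(1) fS finite_subset by blast
  moreover have "x \<notin> B" using xB V2.span_base by blast
  ultimately show ?thesis using B(4) by simp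
qed

lemma circuit_sum:
  assumes rep: "\<forall>S. S \<subseteq> ground m \<longrightarrow> V2.dim (col ` S) = r S" and C: "C \<in> circuits m r"
  shows "(\<Sum>j\<in>C. col j) = 0"
proof -
  have Cg: "C \<subseteq> ground m" by (rule circuit_sub[OF C])
  have finC: "finite C" using Cg finite_subset ground_finite by blast
  have ni: "\<not> indep r C" and pi: "\<And>D. D \<subset> C \<Longrightarrow> indep r D" using C unfolding circuits_def by blast+
  have "V2.dim (col ` C) \<noteq> card C" using rep Cg ni unfolding indep_def by simp
  then have "\<not> findep col C" using findep_iff_dim[OF finC] by simp
  then obtain c j0 where c: "(\<Sum>j\<in>C. scale2 (c j) (col j)) = 0" and j0: "j0 \<in> C" "c j0 \<noteq> 0"
    unfolding findep_def by blast
  have c1: "c j1 = 1" if j1: "j1 \<in> C" for j1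
  proof (rule ccontr)
    assume "c j1 \<noteq> 1"
    then have cj1: "c j1 = 0" by simp
    have "(\<Sum>j\<in>C. scale2 (c j) (col j)) = scale2 (c j1) (col j1) + (\<Sum>j\<in>C - {j1}. scale2 (c j) (col j))"
      by (rule sum.remove[OF finC j1])
    then have s0: "(\<Sum>j\<in>C - {j1}. scale2 (c j) (col j)) = 0" using c cj1 by simp
    have sub: "C - {j1} \<subset> C" using j1 by auto
    have "indep r (C - {j1})" by (rule pi[OF sub])
    moreover have "C - {j1} \<subseteq> ground m" using Cg by auto
    ultimately have "V2.dim (col ` (C - {j1})) = card (C - {j1})" using rep unfolding indep_def by simp
    then have "findep col (C - {j1})" using findep_iff_dim[of "C - {j1}" col] finC by simp
    moreover have "j0 \<in> C - {j1}" using j0 cj1 by auto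
    ultimately have "c j0 = 0" using s0 unfolding findep_def by blast
    then show False using j0 by simp
  qed
  have "(\<Sum>j\<in>C. col j) = (\<Sum>j\<in>C. scale2 (c j) (col j))"
    by (rule sum.cong) (simp_all add: c1)
  then show ?thesis using c by simp
qed

lemma span_all:
  assumes mr: "matroid_rank m r" and rep: "\<forall>S. S \<subseteq> ground m \<longrightarrow> V2.dim (col ` S) = r S"
    and S: "S \<subseteq> ground m" "r S = r (ground m)" and x: "x \<in> ground m"
  shows "col x \<in> V2.span (col ` S)"
proof (rule ccontr)
  assume nx: "col x \<notin> V2.span (col ` S)"
  have "V2.dim (col ` insert x S) = V2.dim (insert (col x) (col ` S))" by simp
  also have "\<dots> = V2.dim (col ` S) + 1" 
    using nx S(1) finite_subset ground_finite by (intro V2_dim_insert) blast+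
  finally have "V2.dim (col ` insert x S) = V2.dim (col ` S) + 1" .
  moreover have "V2.dim (col ` insert x S) = r (insert x S)"
  proof -
    have "insert x S \<subseteq> ground m" using S x by simp
    then show ?thesis using rep by blast
  qed
  moreover have "V2.dim (col ` S) = r S" using rep S by simp
  ultimately have "r (insert x S) = r S + 1" by simp
  moreover have "r (insert x S) \<le> r (ground m)" using S x by (intro mr_mono[OF mr]) auto
  ultimately show False using S by simp
qed



lemma forward:
  assumes mr: "matroid_rank m r" and rk: "r (ground m) = k"
    and rep: "\<forall>S. S \<subseteq> ground m \<longrightarrow> V2.dim (col ` S) = r S"
  shows "\<exists>L. is_index_code (m + k) (receivers m r k) m L"
proof -
  obtain Bv where Bv: "Bv \<subseteq> col ` ground m" "V2.independent Bv" "col ` ground m \<subseteq> V2.span Bv"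
      "card Bv = V2.dim (col ` ground m)"
    using V2.basis_exists by blast
  have cBv: "card Bv = k" using Bv(4) rep rk by simp
  have "finite (col ` ground m)" by simp
  then have finBv: "finite Bv" using Bv(1) by (rule finite_subset[rotated])
  obtain e where "bij_betw e {0..<card Bv} Bv" using ex_bij_betw_nat_finite[OF finBv] by blast
  then have e: "bij_betw e {..<k} Bv" using cBv by (simp add: lessThan_atLeast0)
  define A where "A t i = V2.representation Bv (col t) (e i)" for t i
  define L where "L t s = (if s < m then (if s = t then 1 else 0) else A t (s - m))" for t s
  have enc: "encode (m + k) m L w t = w t + fx Bv e k (\<lambda>i. w (m + i)) (col t)" if "t < m" for w t
  proof -
    have "encode (m + k) m L w t = (\<Sum>s<m+k. L t s * w s)" using that by (simp add: encode_def)
    also have "\<dots> = (\<Sum>s<m. L t s * w s) + (\<Sum>i<k. L t (m+i) * w (m+i))" by (rule sum_split_add)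
    also have "(\<Sum>s<m. L t s * w s) = (\<Sum>s<m. if s = t then w s else 0)"
      by (rule sum.cong) (auto simp: L_def)
    also have "\<dots> = w t" using that by simp
    also have "(\<Sum>i<k. L t (m+i) * w (m+i)) = fx Bv e k (\<lambda>i. w (m + i)) (col t)"
      unfolding fx_def by (rule sum.cong) (auto simp: L_def A_def)
    finally show ?thesis .
  qed
  have ker: "w t = fx Bv e k (\<lambda>i. w (m + i)) (col t)" if "encode (m + k) m L w = 0" "t < m" for w t
  proof -
    have "encode (m + k) m L w t = 0" using that(1) by simp
    then show ?thesis using enc[OF that(2)] by (simp add: bit_eq_add)
  qed
  have colsp: "col t \<in> V2.span Bv" if "t < m" for t using Bv(3) that by (auto simp: ground_def)
  have "is_index_code (m + k) (receivers m r k) m L"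
  proof (rule kernel_imp_code)
    fix d H w
    assume dH: "(d, H) \<in> receivers m r k" and hw: "\<forall>h\<in>H. lin_eval (m + k) h w = 0"
      and ew: "encode (m + k) m L w = 0"
    let ?x = "\<lambda>i. w (m + i)"
    from dH show "w d = 0"
    proof (cases rule: receivers_cases)
      case (r1 i B)
      have Bg: "B \<subseteq> ground m" and rB: "r B = r (ground m)"
        using r1(4) unfolding bases_def by blast+
      have wB: "w j = 0" if "j \<in> B" for j
      proof -
        have "j < m" using that Bg by (auto simp: ground_def)
        then have "lin_eval (m + k) (unit_vec j) w = w j" by (intro lin_eval_unit) simp
        moreover have "unit_vec j \<in> H" using r1(2) that by simp
        ultimately show ?thesis using hw by simp
      qed
      have z: "\<forall>v\<in>col ` B. fx Bv e k ?x v = 0"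
      proof
        fix v assume "v \<in> col ` B"
        then obtain j where j: "j \<in> B" "v = col j" by auto
        then have "j < m" using Bg by (auto simp: ground_def)
        then have "w j = fx Bv e k ?x (col j)" by (rule ker[OF ew])
        then show "fx Bv e k ?x v = 0" using wB[OF j(1)] j(2) by simp
      qed
      have Ssub: "col ` B \<subseteq> V2.span Bv" using Bg Bv(3) by auto
      have ei: "e i \<in> Bv" using e r1(3) bij_betwE by blast
      then obtain j where j: "j \<in> ground m" "e i = col j" using Bv(1) by auto
      have "e i \<in> V2.span (col ` B)" using span_all[OF mr rep Bg rB j(1)] j(2) by simp
      then have "fx Bv e k ?x (e i) = 0" by (rule fx_vanish[OF Bv(2) Ssub z])
      then show ?thesis using fx_basis[OF Bv(2) e r1(3)] r1(1) by simp
    next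
      case (r2 C)
      have Cg: "C \<subseteq> ground m" by (rule circuit_sub[OF r2(1)])
      have finC: "finite C" using Cg finite_subset ground_finite by blast
      have "lin_eval (m + k) (indic (C - {d})) w = 0" using hw r2(3) by simp
      moreover have "C - {d} \<subseteq> {..<m + k}" using Cg by (auto simp: ground_def)
      ultimately have s0: "(\<Sum>j\<in>C - {d}. w j) = 0" by (simp add: lin_eval_indic)
      have "(\<Sum>j\<in>C. col j) = 0" by (rule circuit_sum[OF rep r2(1)])
      then have "0 = fx Bv e k ?x (\<Sum>j\<in>C. col j)" by (simp add: fx_zero)
      also have "\<dots> = (\<Sum>j\<in>C. fx Bv e k ?x (col j))"
        using Cg colsp by (intro fx_sum[OF Bv(2) finC]) (auto simp: ground_def)
      also have "\<dots> = (\<Sum>j\<in>C. w j)"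
      proof (rule sum.cong)
        fix j assume "j \<in> C"
        then have "j < m" using Cg by (auto simp: ground_def)
        then show "fx Bv e k ?x (col j) = w j" using ker[OF ew] by metis
      qed simp
      also have "\<dots> = w d + (\<Sum>j\<in>C - {d}. w j)" by (rule sum.remove[OF finC r2(2)])
      finally show ?thesis using s0 by simp
    next
      case r3
      have x0: "w (m + i) = 0" if "i < k" for i
      proof -
        have "lin_eval (m + k) (unit_vec (m + i)) w = w (m + i)" using that by (intro lin_eval_unit) simp
        moreover have "unit_vec (m + i) \<in> H" using r3(2) that by simp
        ultimately show ?thesis using hw by simp
      qed
      have "w d = fx Bv e k ?x (col d)" by (rule ker[OF ew r3(1)])
      also have "\<dots> = 0" unfolding fx_def using x0 by simp
      finally show ?thesis .
    qed
  qed
  then show ?thesis by blast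
qed



lemma sum_fun_app: "(sum f S) x = (\<Sum>j\<in>S. f j x)"
  by (induction S rule: infinite_finite_induct) auto

definition Kset :: "nat \<Rightarrow> (nat \<Rightarrow> nat \<Rightarrow> bit) \<Rightarrow> nat \<Rightarrow> (nat \<Rightarrow> bit) set" where
  "Kset N L l = {w. (\<forall>s. s \<notin> {..<N} \<longrightarrow> w s = 0) \<and> encode N l L w = 0}"

lemma supp_fin: "finite {w::nat \<Rightarrow> bit. \<forall>s. s \<notin> {..<N} \<longrightarrow> w s = 0}"
  using card_supp[of "{..<N}"] by simp

lemma K_fin: "finite (Kset N L l)"
  unfolding Kset_def by (rule finite_subset[OF _ supp_fin]) blast

lemma K_add: "w \<in> Kset N L l \<Longrightarrow> w' \<in> Kset N L l \<Longrightarrow> w + w' \<in> Kset N L l"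
  unfolding Kset_def by (simp add: encode_add)

lemma K_card: "2 ^ N \<le> 2 ^ l * card (Kset N L l)"
proof -
  let ?D = "{w::nat \<Rightarrow> bit. \<forall>s. s \<notin> {..<N} \<longrightarrow> w s = 0}"
  let ?E = "{c::nat \<Rightarrow> bit. \<forall>t. t \<notin> {..<l} \<longrightarrow> c t = 0}"
  let ?K = "Kset N L l"
  let ?F = "\<lambda>c. {w \<in> ?D. encode N l L w = c}"
  have cD: "card ?D = 2 ^ N" using card_supp[of "{..<N}"] by simp
  have cE: "card ?E = 2 ^ l" and fE: "finite ?E" using card_supp[of "{..<l}"] by simp_all
  have "?D \<subseteq> (\<Union>c\<in>?E. ?F c)"
  proof
    fix w assume w: "w \<in> ?D"
    have "encode N l L w \<in> ?E" by (simp add: encode_def)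
    then show "w \<in> (\<Union>c\<in>?E. ?F c)" using w by blast
  qed
  then have "card ?D \<le> card (\<Union>c\<in>?E. ?F c)"
    by (rule card_mono[rotated]) (intro finite_UN_I fE, rule finite_subset[OF _ supp_fin], blast)
  also have "\<dots> \<le> (\<Sum>c\<in>?E. card (?F c))" by (rule card_UN_le[OF fE])
  also have "\<dots> \<le> (\<Sum>c\<in>?E. card ?K)"
  proof (rule sum_mono)
    fix c assume "c \<in> ?E"
    show "card (?F c) \<le> card ?K"
    proof (cases "?F c = {}")
      case True then show ?thesis by (simp only: card.empty)
    next
      case False
      then obtain w0 where w0: "w0 \<in> ?F c" by blast
      have "?F c \<subseteq> (\<lambda>w. w + w0) ` ?K"
      proof
        fix w assume w: "w \<in> ?F c"
        have "w + w0 \<in> ?K" using w w0 unfolding Kset_def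
          by (auto simp: encode_add fun_eq_iff)
        moreover have "w = (w + w0) + w0" by (simp add: fun_eq_iff add.assoc)
        ultimately show "w \<in> (\<lambda>w. w + w0) ` ?K" by blast
      qed
      then have "card (?F c) \<le> card ((\<lambda>w. w + w0) ` ?K)"
        by (rule card_mono[rotated]) (simp add: K_fin)
      also have "\<dots> \<le> card ?K" by (rule card_image_le[OF K_fin])
      finally show ?thesis .
    qed
  qed
  also have "\<dots> = 2 ^ l * card ?K" using cE by simp
  finally show ?thesis using cD by simp
qed



locale bw =
  fixes m k :: nat and r :: "nat set \<Rightarrow> nat" and L :: "nat \<Rightarrow> nat \<Rightarrow> bit"
  assumes mr: "matroid_rank m r" and rk: "r (ground m) = k"
    and code: "is_index_code (m + k) (receivers m r k) m L"
begin

abbreviation "K \<equiv> Kset (m + k) L m"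

lemma Kcard: "2 ^ k \<le> card K"
proof -
  have "2 ^ m * 2 ^ k \<le> 2 ^ m * card K" using K_card[of "m + k" m L] by (simp add: power_add)
  then show ?thesis by simp
qed

lemma Kmem: "w \<in> K \<Longrightarrow> encode (m + k) m L w = 0" "w \<in> K \<Longrightarrow> s \<ge> m + k \<Longrightarrow> w s = 0"
  unfolding Kset_def by auto

lemma kerR3:
  assumes w: "w \<in> K" and x: "\<forall>i<k. w (m + i) = 0" and j: "j < m"
  shows "w j = 0"
proof (rule code_imp_kernel[OF code, of j "unit_vec ` {m..<m+k}"])
  show "(j, unit_vec ` {m..<m+k}) \<in> receivers m r k"
    using j unfolding receivers_def R3_def by blast
  show "\<forall>h\<in>unit_vec ` {m..<m+k}. lin_eval (m + k) h w = 0"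
  proof
    fix h assume "h \<in> unit_vec ` {m..<m+k}"
    then obtain s where s: "s \<in> {m..<m+k}" "h = unit_vec s" by blast
    then obtain i where "s = m + i" "i < k" by (metis atLeastLessThan_iff le_Suc_ex nat_add_left_cancel_less)
    then show "lin_eval (m + k) h w = 0" using s x lin_eval_unit[of s "m + k" w] by simp
  qed
  show "encode (m + k) m L w = 0" using Kmem(1)[OF w] .
qed

lemma kerR1:
  assumes B: "B \<in> bases m r" and w: "w \<in> K" and z: "\<forall>j\<in>B. w j = 0" and i: "i < k"
  shows "w (m + i) = 0"
proof (rule code_imp_kernel[OF code, of "m + i" "unit_vec ` B"])
  show "(m + i, unit_vec ` B) \<in> receivers m r k"
    using B i unfolding receivers_def R1_def by blast
  have Bg: "B \<subseteq> ground m" using basis_props[OF B rk] by simp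
  show "\<forall>h\<in>unit_vec ` B. lin_eval (m + k) h w = 0"
  proof
    fix h assume "h \<in> unit_vec ` B"
    then obtain j where j: "j \<in> B" "h = unit_vec j" by blast
    then have "j < m + k" using Bg by (auto simp: ground_def)
    then show "lin_eval (m + k) h w = 0" using j z lin_eval_unit[of j "m + k" w] by simp
  qed
  show "encode (m + k) m L w = 0" using Kmem(1)[OF w] .
qed

lemma kerR2:
  assumes C: "C \<in> circuits m r" and y: "y \<in> C" and w: "w \<in> K" and s: "(\<Sum>j\<in>C - {y}. w j) = 0"
  shows "w y = 0"
proof (rule code_imp_kernel[OF code, of y "{indic (C - {y})}"])
  show "(y, {indic (C - {y})}) \<in> receivers m r k"
    using C y unfolding receivers_def R2_def by blast
  have "C - {y} \<subseteq> {..<m + k}" using circuit_sub[OF C] by (auto simp: ground_def)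
  then show "\<forall>h\<in>{indic (C - {y})}. lin_eval (m + k) h w = 0"
    using s by (simp add: lin_eval_indic)
  show "encode (m + k) m L w = 0" using Kmem(1)[OF w] .
qed

lemma zeroB:
  assumes B: "B \<in> bases m r" and w: "w \<in> K" and z: "\<forall>j\<in>B. w j = 0"
  shows "w = 0"
proof
  fix s
  have x: "\<forall>i<k. w (m + i) = 0" using kerR1[OF B w z] by blast
  show "w s = 0 s"
  proof (cases "s < m")
    case True then show ?thesis using kerR3[OF w x True] by simp
  next
    case False
    show ?thesis
    proof (cases "s < m + k")
      case True
      then obtain i where "s = m + i" "i < k" using False by (metis add_diff_inverse_nat nat_add_left_cancel_less)
      then show ?thesis using x by simp
    next
      case False then show ?thesis using Kmem(2)[OF w] by simp
    qed
  qed
qed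

lemma surjB:
  assumes B: "B \<in> bases m r" and z: "\<forall>j. j \<notin> B \<longrightarrow> z j = 0"
  shows "\<exists>w\<in>K. \<forall>j\<in>B. w j = z j"
proof -
  let ?\<rho> = "\<lambda>w::nat \<Rightarrow> bit. \<lambda>j. if j \<in> B then w j else 0"
  let ?Z = "{z::nat \<Rightarrow> bit. \<forall>j. j \<notin> B \<longrightarrow> z j = 0}"
  have Bg: "B \<subseteq> ground m" and cB: "card B = k" using basis_props[OF B rk] by auto
  have finB: "finite B" using Bg finite_subset ground_finite by blast
  have cZ: "card ?Z = 2 ^ k" and fZ: "finite ?Z" using card_supp[OF finB] cB by auto
  have inj: "inj_on ?\<rho> K"
  proof (rule inj_onI)
    fix w w' assume w: "w \<in> K" and w': "w' \<in> K" and eq: "?\<rho> w = ?\<rho> w'"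
    have "w + w' \<in> K" by (rule K_add[OF w w'])
    moreover have "\<forall>j\<in>B. (w + w') j = 0"
    proof
      fix j assume "j \<in> B"
      then have "w j = w' j" using fun_cong[OF eq, of j] by simp
      then show "(w + w') j = 0" by (simp add: bit_eq_add)
    qed
    ultimately have "w + w' = 0" by (rule zeroB[OF B])
    then show "w = w'" by (simp add: fun_eq_iff bit_eq_add)
  qed
  have sub: "?\<rho> ` K \<subseteq> ?Z" by auto
  have "card (?\<rho> ` K) = card K" by (rule card_image[OF inj])
  then have "card ?Z \<le> card (?\<rho> ` K)" using Kcard cZ by simp
  then have "?\<rho> ` K = ?Z" using card_seteq[OF fZ sub] by simp
  moreover have "z \<in> ?Z" using z by simp
  ultimately obtain w where "w \<in> K" "z = ?\<rho> w" by (metis (no_types, lifting) imageE)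
  then show ?thesis by (intro bexI[of _ w]) auto
qed

lemma I1:
  assumes J: "J \<subseteq> ground m" "indep r J" and c: "\<forall>w\<in>K. (\<Sum>j\<in>J. c j * w j) = 0" and j0: "j0 \<in> J"
  shows "c j0 = 0"
proof -
  obtain B where B: "J \<subseteq> B" "B \<in> bases m r" using mr_basis_ext[OF mr J] by blast
  have "\<forall>j. j \<notin> B \<longrightarrow> unit_vec j0 j = 0" using B j0 by (auto simp: unit_vec_def)
  then obtain w where w: "w \<in> K" "\<forall>j\<in>B. w j = unit_vec j0 j" using surjB[OF B(2)] by blast
  have "(\<Sum>j\<in>J. c j * w j) = (\<Sum>j\<in>J. if j = j0 then c j else 0)"
  proof (rule sum.cong)
    fix j assume "j \<in> J"
    then have "w j = unit_vec j0 j" using w B by auto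
    then show "c j * w j = (if j = j0 then c j else 0)" by (simp add: unit_vec_def)
  qed simp
  also have "\<dots> = c j0"
  proof -
    have "finite J" using J(1) finite_subset ground_finite by blast
    then show ?thesis using j0 by (simp add: sum.delta)
  qed
  finally show ?thesis using c w by simp
qed


lemma circ_sum:
  assumes C: "C \<in> circuits m r" and w: "w \<in> K"
  shows "(\<Sum>j\<in>C. w j) = 0"
proof -
  have Cg: "C \<subseteq> ground m" by (rule circuit_sub[OF C])
  have finC: "finite C" using Cg finite_subset ground_finite by blast
  have ni: "\<not> indep r C" and pi: "\<And>D. D \<subset> C \<Longrightarrow> indep r D" using C unfolding circuits_def by blast+
  have "C \<noteq> {}" using ni mr_empty[OF mr] unfolding indep_def by auto
  then obtain y where y: "y \<in> C" by blast
  let ?s = "\<lambda>w. (\<Sum>j\<in>C - {y}. w j)"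
  have rem: "(\<Sum>j\<in>C. v j) = v y + ?s v" for v :: "nat \<Rightarrow> bit" by (rule sum.remove[OF finC y])
  show ?thesis
  proof (cases "C = {y}")
    case True
    then have "?s w = 0" by simp
    then have "w y = 0" by (rule kerR2[OF C y w])
    then show ?thesis using True by simp
  next
    case False
    then have "{y} \<subset> C" using y by auto
    then have iy: "indep r {y}" by (rule pi)
    have yg: "{y} \<subseteq> ground m" using y Cg by auto
    obtain w1 where w1: "w1 \<in> K" "w1 y = 1"
    proof (rule ccontr)
      assume "\<not> thesis"
      with that have all0: "\<forall>w\<in>K. w y = 0" by (metis bit_not_one_iff)
      have "\<forall>w\<in>K. (\<Sum>j\<in>{y}. (\<lambda>_. 1::bit) j * w j) = 0" using all0 by simp
      then have "(\<lambda>_. 1::bit) y = 0" by (rule I1[OF yg iy]) simp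
      then show False by simp
    qed
    have s1: "?s w1 = 1"
    proof (rule ccontr)
      assume "?s w1 \<noteq> 1"
      then have "?s w1 = 0" by simp
      then have "w1 y = 0" by (rule kerR2[OF C y w1(1)])
      then show False using w1 by simp
    qed
    show ?thesis
    proof (cases "?s w = 0")
      case True
      then have "w y = 0" by (rule kerR2[OF C y w])
      then show ?thesis using rem[of w] True by simp
    next
      case False
      then have sw: "?s w = 1" by simp
      have ww: "w + w1 \<in> K" by (rule K_add[OF w w1(1)])
      have "?s (w + w1) = ?s w + ?s w1" by (simp add: sum.distrib)
      then have "?s (w + w1) = 0" using sw s1 by simp
      then have "(w + w1) y = 0" by (rule kerR2[OF C y ww])
      then have "w y = 1" using w1(2) by (simp add: bit_eq_add)
      then show ?thesis using rem[of w] sw by simp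
    qed
  qed
qed

lemma rep_exists:
  "\<exists>n col. (\<forall>i j. n \<le> j \<longrightarrow> col i j = (0::bit)) \<and> (\<forall>S. S \<subseteq> ground m \<longrightarrow> rank2 (col ` S) = r S)"
proof -
  define n where "n = card K"
  obtain en where en: "bij_betw en {0..<n} K" using ex_bij_betw_nat_finite[OF K_fin] n_def by blast
  define col where "col i = (\<lambda>t. if t < n then en t i else 0)" for i
  have famsum: "(\<Sum>j\<in>S. scale2 (c j) (col j)) = 0 \<longleftrightarrow> (\<forall>w\<in>K. (\<Sum>j\<in>S. c j * w j) = 0)" for S c
  proof -
    have app: "(\<Sum>j\<in>S. scale2 (c j) (col j)) t = (if t < n then (\<Sum>j\<in>S. c j * en t j) else 0)" for t
      by (simp add: sum_fun_app scale2_def col_def)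
    show ?thesis
    proof
      assume h: "(\<Sum>j\<in>S. scale2 (c j) (col j)) = 0"
      show "\<forall>w\<in>K. (\<Sum>j\<in>S. c j * w j) = 0"
      proof
        fix w assume "w \<in> K"
        then have "w \<in> en ` {0..<n}" using en by (simp add: bij_betw_def)
        then obtain t where t: "t < n" "w = en t" by auto
        show "(\<Sum>j\<in>S. c j * w j) = 0" using app[of t] h t by simp
      qed
    next
      assume h: "\<forall>w\<in>K. (\<Sum>j\<in>S. c j * w j) = 0"
      show "(\<Sum>j\<in>S. scale2 (c j) (col j)) = 0"
      proof
        fix t
        show "(\<Sum>j\<in>S. scale2 (c j) (col j)) t = 0 t"
        proof (cases "t < n")
          case True
          then have "en t \<in> K" using en by (auto simp: bij_betw_def)
          then show ?thesis using h app[of t] True by simp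
        qed (simp add: app)
      qed
    qed
  qed
  have indep_iff: "indep r J \<longleftrightarrow> findep col J" if J: "J \<subseteq> ground m" for J
  proof
    assume "indep r J"
    then show "findep col J" unfolding findep_def famsum using I1[OF J] by blast
  next
    assume fJ: "findep col J"
    show "indep r J"
    proof (rule ccontr)
      assume "\<not> indep r J"
      then obtain C where C: "C \<subseteq> J" "C \<in> circuits m r" using mr_circuit[OF mr J] by blast
      have finJ: "finite J" using J finite_subset ground_finite by blast
      have "C \<noteq> {}" using C(2) mr_empty[OF mr] unfolding circuits_def indep_def by auto
      then obtain y where y: "y \<in> C" by blast
      let ?c = "\<lambda>j. if j \<in> C then 1 else (0::bit)"
      have "\<forall>w\<in>K. (\<Sum>j\<in>J. ?c j * w j) = 0"
      proof
        fix w assume w: "w \<in> K"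
        have "(\<Sum>j\<in>J. ?c j * w j) = (\<Sum>j\<in>J. if j \<in> C then w j else 0)" by (rule sum.cong) auto
        also have "\<dots> = (\<Sum>j\<in>J \<inter> C. w j)" by (simp add: sum.inter_restrict[OF finJ])
        also have "J \<inter> C = C" using C(1) by auto
        finally show "(\<Sum>j\<in>J. ?c j * w j) = 0" using circ_sum[OF C(2) w] by simp
      qed
      moreover have allc: "\<forall>c. (\<forall>w\<in>K. (\<Sum>j\<in>J. c j * w j) = 0) \<longrightarrow> (\<forall>j\<in>J. c j = 0)"
        using fJ unfolding findep_def famsum .
      moreover have "y \<in> J" using y C(1) by blast
      ultimately have "?c y = 0" using allc[rule_format, of ?c y] by blast
      then show False using y by simp
    qed
  qed
  have rank: "V2.dim (col ` S) = r S" if S: "S \<subseteq> ground m" for S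
  proof (rule antisym)
    have finS: "finite S" using S finite_subset ground_finite by blast
    obtain Bs where Bs: "Bs \<subseteq> col ` S" "V2.independent Bs" "col ` S \<subseteq> V2.span Bs" "card Bs = V2.dim (col ` S)"
      using V2.basis_exists by blast
    define p where "p v = (SOME j. j \<in> S \<and> col j = v)" for v
    have p: "p v \<in> S \<and> col (p v) = v" if "v \<in> Bs" for v
    proof -
      have "\<exists>j. j \<in> S \<and> col j = v" using that Bs(1) by auto
      then show ?thesis unfolding p_def by (rule someI_ex)
    qed
    define J where "J = p ` Bs"
    have JS: "J \<subseteq> S" using p unfolding J_def by auto
    have colJ: "col ` J = Bs" unfolding J_def image_image using p by simp
    have injp: "inj_on p Bs" by (metis inj_onI p)
    have injc: "inj_on col J" unfolding J_def by (rule inj_onI) (metis imageE p)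
    have finJ: "finite J" using JS finS finite_subset by blast
    have "findep col J" using imp_findep[OF injc _ finJ] Bs(2) colJ by simp
    then have "indep r J" using indep_iff JS S by auto
    then have "r J = card J" unfolding indep_def .
    also have "card J = card Bs" unfolding J_def by (rule card_image[OF injp])
    finally have "V2.dim (col ` S) = r J" using Bs(4) by simp
    also have "r J \<le> r S" using JS S by (intro mr_mono[OF mr])
    finally show "V2.dim (col ` S) \<le> r S" .
  next
    have finS: "finite S" using S finite_subset ground_finite by blast
    obtain I where I: "I \<subseteq> S" "indep r I" "card I = r S" using mr_indep_subset[OF mr S] by blast
    have finI: "finite I" using I(1) finS finite_subset by blast
    have "findep col I" using indep_iff I S by auto
    then have "V2.dim (col ` I) = card I" using findep_iff_dim[OF finI] by simp
    moreover have "V2.dim (col ` I) \<le> V2.dim (col ` S)"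
      using I(1) finS by (intro V2_dim_mono_fin) auto
    ultimately show "r S \<le> V2.dim (col ` S)" using I(3) by simp
  qed
  have "\<forall>i j. n \<le> j \<longrightarrow> col i j = 0" by (simp add: col_def)
  moreover have "\<forall>S. S \<subseteq> ground m \<longrightarrow> rank2 (col ` S) = r S" using rank by (simp add: rank2_def)
  ultimately show ?thesis by blast
qed

end


theorem theorem3:
  fixes m k :: nat and r :: "nat set \<Rightarrow> nat"
  assumes "matroid_rank m r"
    and "r (ground m) = k"
  shows "F2_representable m r \<longleftrightarrow>
         perfect_scalar_linear_code_exists (m + k) (receivers m r k)"
proof
  assume "F2_representable m r"
  then obtain n col where "\<forall>S. S \<subseteq> ground m \<longrightarrow> rank2 (col ` S) = r S"
    unfolding F2_representable_def by blast
  then have rep: "\<forall>S. S \<subseteq> ground m \<longrightarrow> V2.dim (col ` S) = r S" by (simp add: rank2_def)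
  show "perfect_scalar_linear_code_exists (m + k) (receivers m r k)"
  proof (cases "m = 0")
    case True
    then have "receivers m r k = {}" using receivers_empty[OF assms] by simp
    then show ?thesis unfolding perfect_scalar_linear_code_exists_def is_index_code_def by simp
  next
    case False
    then have "mu (receivers m r k) = m" using mu_eq[OF assms] by simp
    then show ?thesis using forward[OF assms rep] unfolding perfect_scalar_linear_code_exists_def by simp
  qed
next
  assume "perfect_scalar_linear_code_exists (m + k) (receivers m r k)"
  then obtain L where L: "is_index_code (m + k) (receivers m r k) (mu (receivers m r k)) L"
    unfolding perfect_scalar_linear_code_exists_def by blast
  show "F2_representable m r"
  proof (cases "m = 0")
    case True
    have "rank2 ((\<lambda>i j. 0::bit) ` S) = r S" if "S \<subseteq> ground m" for S
    proof -
      have "S = {}" using that True by (simp add: ground_def)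
      moreover have "V2.dim {} = 0" using V2.dim_eq_card_independent[OF V2.independent_empty] by simp
      ultimately show ?thesis using mr_empty[OF assms(1)] by (simp add: rank2_def)
    qed
    then have "(\<forall>i j. 0 \<le> j \<longrightarrow> (\<lambda>i j. 0::bit) i j = 0) \<and>
        (\<forall>S. S \<subseteq> ground m \<longrightarrow> rank2 ((\<lambda>i j. 0::bit) ` S) = r S)" by simp
    then show ?thesis unfolding F2_representable_def by (intro exI)
  next
    case False
    then have "mu (receivers m r k) = m" using mu_eq[OF assms] by simp
    then have "is_index_code (m + k) (receivers m r k) m L" using L by simp
    then interpret bw m k r L using assms by unfold_locales
    show ?thesis unfolding F2_representable_def by (rule rep_exists)
  qed
qed

end
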